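(* Suppose $G_1$ and $G_2$ are topological groups and there exist continuous injective group homomorphisms $\varphi_1:G_1\to G_2$ and $\varphi_2:G_2\to G_1$. Let $\mathcal C$ be a class of subgroups which is closed under continuous homomorphic images. If $G_1$ has a universal $\mathcal C$ subgroup, then $G_2$ also has a universal $\mathcal C$ subgroup.
   Context: $\mathcal C$ is a class of subgroups of topological groups; closed under continuous homomorphic images means: if $H\in\mathcal C$ is a subgroup of a topological group $G$ and $\psi:G\to G'$ is a continuous group homomorphism into a topological group $G'$, then $\psi(H)\in\mathcal C$. For subgroups $H\subseteq G$ and $K\subseteq G'$, write $H\le_g K$ if there is a continuous homomorphism $\varphi:G\to G'$ with $\varphi^{-1}(K)=H$. A universal $\mathcal C$ subgroup of $G$ is a subgroup $K\subseteq G$ with $K\in\mathcal C$ such that $H\le_g K$ (via a continuous endomorphism of $G$) for every subgroup $H\subseteq G$ with $H\in\mathcal C$. *)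

theory Defs
  imports "HOL-Analysis.Analysis" "HOL-Algebra.Group"
begin

definition topgroup :: "('a, 'm) monoid_scheme \<Rightarrow> 'a topology \<Rightarrow> bool" where
  "topgroup G T \<longleftrightarrow> group G \<and> topspace T = carrier G \<and>
     continuous_map (prod_topology T T) T (\<lambda>(x, y). x \<otimes>\<^bsub>G\<^esub> y) \<and>
     continuous_map T T (\<lambda>x. inv\<^bsub>G\<^esub> x)"

definition cont_hom ::
  "('a, 'm) monoid_scheme \<Rightarrow> 'a topology \<Rightarrow> ('b, 'n) monoid_scheme \<Rightarrow> 'b topology \<Rightarrow> ('a \<Rightarrow> 'b) \<Rightarrow> bool" where
  "cont_hom G T G' T' f \<longleftrightarrow> f \<in> hom G G' \<and> continuous_map T T' f"

text \<open>A class of subgroups of topological groups is represented (for groups with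
  elements of a given type) by a predicate C G T H, meaning "the subgroup H of the
  topological group (G,T) belongs to the class".\<close>
definition closed_hom_images ::
  "(('a, 'm) monoid_scheme \<Rightarrow> 'a topology \<Rightarrow> 'a set \<Rightarrow> bool) \<Rightarrow>
   (('b, 'n) monoid_scheme \<Rightarrow> 'b topology \<Rightarrow> 'b set \<Rightarrow> bool) \<Rightarrow> bool" where
  "closed_hom_images C C' \<longleftrightarrow>
     (\<forall>G T G' T' H f. topgroup G T \<and> topgroup G' T' \<and> subgroup H G \<and> C G T H \<and>
        cont_hom G T G' T' f \<longrightarrow> C' G' T' (f ` H))"

definition universal_subgroup ::
  "(('a, 'm) monoid_scheme \<Rightarrow> 'a topology \<Rightarrow> 'a set \<Rightarrow> bool) \<Rightarrow>
   ('a, 'm) monoid_scheme \<Rightarrow> 'a topology \<Rightarrow> 'a set \<Rightarrow> bool" where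
  "universal_subgroup C G T K \<longleftrightarrow> subgroup K G \<and> C G T K \<and>
     (\<forall>H. subgroup H G \<and> C G T H \<longrightarrow>
        (\<exists>f. cont_hom G T G T f \<and> {x \<in> carrier G. f x \<in> K} = H))"

end

theory Submission
  imports Defs
begin

theorem mainTheorem5:
  fixes G1 :: "('a, 'm) monoid_scheme" and T1 :: "'a topology"
    and G2 :: "('b, 'n) monoid_scheme" and T2 :: "'b topology"
    and C1 :: "('a, 'm) monoid_scheme \<Rightarrow> 'a topology \<Rightarrow> 'a set \<Rightarrow> bool"
    and C2 :: "('b, 'n) monoid_scheme \<Rightarrow> 'b topology \<Rightarrow> 'b set \<Rightarrow> bool"
    and \<phi>1 :: "'a \<Rightarrow> 'b" and \<phi>2 :: "'b \<Rightarrow> 'a"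
  assumes "topgroup G1 T1" and "topgroup G2 T2"
    and "cont_hom G1 T1 G2 T2 \<phi>1" and "inj_on \<phi>1 (carrier G1)"
    and "cont_hom G2 T2 G1 T1 \<phi>2" and "inj_on \<phi>2 (carrier G2)"
    and "closed_hom_images C1 C1" and "closed_hom_images C1 C2"
    and "closed_hom_images C2 C1" and "closed_hom_images C2 C2"
    and "\<exists>K. universal_subgroup C1 G1 T1 K"
  shows "\<exists>K. universal_subgroup C2 G2 T2 K"
proof -
  obtain K1 where K1: "universal_subgroup C1 G1 T1 K1" using assms(11) by blast
  have g1: "group G1" and g2: "group G2" using assms(1,2) unfolding topgroup_def by auto
  have h1: "\<phi>1 \<in> hom G1 G2" and c1: "continuous_map T1 T2 \<phi>1" using assms(3) unfolding cont_hom_def by auto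
  have h2: "\<phi>2 \<in> hom G2 G1" and c2: "continuous_map T2 T1 \<phi>2" using assms(5) unfolding cont_hom_def by auto
  have gh1: "group_hom G1 G2 \<phi>1" using g1 g2 h1 by (simp add: group_hom_def group_hom_axioms_def)
  have gh2: "group_hom G2 G1 \<phi>2" using g1 g2 h2 by (simp add: group_hom_def group_hom_axioms_def)
  have sK1: "subgroup K1 G1" and CK1: "C1 G1 T1 K1" using K1 unfolding universal_subgroup_def by auto
  have K1c: "K1 \<subseteq> carrier G1" using sK1 subgroup.subset by blast
  let ?K = "\<phi>1 ` K1"
  have "subgroup ?K G2" using group_hom.subgroup_img_is_subgroup[OF gh1 sK1] .
  moreover have "C2 G2 T2 ?K" using assms(8) assms(1,2,3) sK1 CK1 unfolding closed_hom_images_def by blast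
  moreover have "\<exists>f. cont_hom G2 T2 G2 T2 f \<and> {x \<in> carrier G2. f x \<in> ?K} = H"
    if sH: "subgroup H G2" and CH: "C2 G2 T2 H" for H
  proof -
    have Hc: "H \<subseteq> carrier G2" using sH subgroup.subset by blast
    have s2: "subgroup (\<phi>2 ` H) G1" using group_hom.subgroup_img_is_subgroup[OF gh2 sH] .
    have "C1 G1 T1 (\<phi>2 ` H)" using assms(9) assms(1,2,5) sH CH unfolding closed_hom_images_def by blast
    then obtain f where f: "cont_hom G1 T1 G1 T1 f" and fe: "{x \<in> carrier G1. f x \<in> K1} = \<phi>2 ` H"
      using K1 s2 unfolding universal_subgroup_def by blast
    have hf: "f \<in> hom G1 G1" and cf: "continuous_map T1 T1 f" using f unfolding cont_hom_def by auto
    let ?g = "\<phi>1 \<circ> f \<circ> \<phi>2"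
    have "cont_hom G2 T2 G2 T2 ?g" unfolding cont_hom_def
      using hom_compose[OF hom_compose[OF h2 hf] h1] continuous_map_compose[OF continuous_map_compose[OF c2 cf] c1]
      by (simp add: comp_assoc)
    moreover have "{x \<in> carrier G2. ?g x \<in> ?K} = H"
    proof (rule equalityI; rule subsetI)
      fix x assume "x \<in> {x \<in> carrier G2. ?g x \<in> ?K}"
      then have xc: "x \<in> carrier G2" and "\<phi>1 (f (\<phi>2 x)) \<in> \<phi>1 ` K1" by auto
      then obtain k where k: "k \<in> K1" "\<phi>1 (f (\<phi>2 x)) = \<phi>1 k" by auto
      have p2: "\<phi>2 x \<in> carrier G1" using h2 xc by (simp add: hom_in_carrier)
      have fc: "f (\<phi>2 x) \<in> carrier G1" using hf p2 by (simp add: hom_in_carrier)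
      have "f (\<phi>2 x) = k" using assms(4) fc k K1c by (meson inj_onD subsetD)
      then have "\<phi>2 x \<in> \<phi>2 ` H" using fe p2 k by blast
      then obtain y where "y \<in> H" "\<phi>2 x = \<phi>2 y" by auto
      then show "x \<in> H" using assms(6) xc Hc by (metis inj_onD subsetD)
    next
      fix x assume xH: "x \<in> H"
      then have xc: "x \<in> carrier G2" using Hc by auto
      have "\<phi>2 x \<in> {x \<in> carrier G1. f x \<in> K1}" using fe xH by auto
      then show "x \<in> {x \<in> carrier G2. ?g x \<in> ?K}" using xc by auto
    qed
    ultimately show ?thesis by blast
  qed
  ultimately show ?thesis unfolding universal_subgroup_def by blast
qed

end
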